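(* The Chebyshev polynomials satisfy: (1) $\sum_{r=0}^sJ_{r,-1/2}=J_{s,1/2}$ for all $s\ge0$; (2) $\sum_{r=0}^{s-1}2J_{r,1/2}(x)=\frac{J_{s,-1/2}(x)-1}{x-1}$ for all $s\ge1$; (3) for every $T\in C^1[-1,1]$ and $s\ge0$, $\sum_{r=s+1}^\infty\langle J_{r,-1/2},T\rangle_{-1/2}=\langle J_{s,1/2},T(1)-T\rangle_{-1/2}$; (4) for every $T\in C^1[-1,1]$ and $s\ge0$, $\sum_{r=s}^\infty\langle J_{r,1/2},T\rangle_{1/2}=\langle J_{s,-1/2},T\rangle_{-1/2}$.
   Context: $J_{k,1/2}$ and $J_{k,-1/2}$ ($k\ge0$) are defined by $J_{0,1/2}=1$, $J_{1,1/2}(x)=2x$, $J_{0,-1/2}=1$, $J_{1,-1/2}(x)=2x-1$, both satisfying $xp_k(x)=\frac12p_{k+1}(x)+\frac12p_{k-1}(x)$ for $k\ge1$ (Chebyshev polynomials of the second and third kind). For $\alpha\in\{\pm1/2\}$, $\langle f,g\rangle_\alpha=\frac{2^{\alpha+1/2}}{\pi}\int_{-1}^1f(x)g(x)(1-x)^\alpha(1+x)^{1/2}dx$. *)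

theory Defs
  imports "HOL-Analysis.Analysis"
begin

text \<open>Chebyshev polynomials J_{k,1/2} (second kind), as real functions.\<close>
fun Jp :: "nat \<Rightarrow> real \<Rightarrow> real" where
  "Jp 0 x = 1"
| "Jp (Suc 0) x = 2 * x"
| "Jp (Suc (Suc k)) x = 2 * x * Jp (Suc k) x - Jp k x"

text \<open>Chebyshev polynomials J_{k,-1/2} (third kind), as real functions.\<close>
fun Jm :: "nat \<Rightarrow> real \<Rightarrow> real" where
  "Jm 0 x = 1"
| "Jm (Suc 0) x = 2 * x - 1"
| "Jm (Suc (Suc k)) x = 2 * x * Jm (Suc k) x - Jm k x"

text \<open>The weighted inner product for alpha = 1/2 or -1/2.\<close>
definition ip :: "real \<Rightarrow> (real \<Rightarrow> real) \<Rightarrow> (real \<Rightarrow> real) \<Rightarrow> real" where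
  "ip \<alpha> f g = 2 powr (\<alpha> + 1/2) / pi *
     integral {-1..1} (\<lambda>x. f x * g x * (1 - x) powr \<alpha> * (1 + x) powr (1/2))"

definition C1_on_interval :: "(real \<Rightarrow> real) \<Rightarrow> bool" where
  "C1_on_interval T \<longleftrightarrow> (\<exists>T'. continuous_on {-1..1} T' \<and>
     (\<forall>x\<in>{-1..1}. (T has_real_derivative T' x) (at x within {-1..1})))"

end

theory Submission
  imports Defs
begin


lemma Jm_Jp: "Jm (Suc n) x = Jp (Suc n) x - Jp n x"
proof (induction n x rule: Jp.induct)
  case (3 k x)
  have a: "Jm (Suc (Suc (Suc k))) x = 2*x*Jm (Suc (Suc k)) x - Jm (Suc k) x" by (rule Jm.simps(3))
  have b: "Jp (Suc (Suc (Suc k))) x = 2*x*Jp (Suc (Suc k)) x - Jp (Suc k) x" by (rule Jp.simps(3))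
  show ?case unfolding a b 3(1) 3(2) by (simp add: algebra_simps)
qed (auto simp: algebra_simps)

lemma part1: "(\<Sum>r\<le>s. Jm r x) = Jp s x"
  by (induction s) (auto simp: Jm_Jp)

lemma Jm_diff: "Jm (Suc s) x - Jm s x = 2*(x-1)*Jp s x"
proof (cases s)
  case (Suc k)
  have a: "Jm (Suc (Suc k)) x = Jp (Suc (Suc k)) x - Jp (Suc k) x" by (rule Jm_Jp)
  have b: "Jm (Suc k) x = Jp (Suc k) x - Jp k x" by (rule Jm_Jp)
  have c: "Jp (Suc (Suc k)) x = 2*x*Jp (Suc k) x - Jp k x" by (rule Jp.simps(3))
  show ?thesis unfolding Suc a b c by (simp add: algebra_simps)
qed simp

lemma part2_aux: "(x-1) * (\<Sum>r<s. 2 * Jp r x) = Jm s x - 1"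
proof (induction s)
  case (Suc s) then show ?case using Jm_diff[of s x] by (simp add: algebra_simps)
qed simp

lemma part2: "s \<ge> 1 \<Longrightarrow> x \<noteq> 1 \<Longrightarrow> (\<Sum>r<s. 2 * Jp r x) = (Jm s x - 1) / (x - 1)"
  using part2_aux[of x s] by (simp add: field_simps)

lemma part2b: "(x-1) * (\<Sum>r<N. 2 * Jp (r+s) x) = Jm (N+s) x - Jm s x"
proof (induction N)
  case (Suc N) then show ?case using Jm_diff[of "N+s" x] by (simp add: algebra_simps)
qed simp

lemma Jp_trig: "Jp n (- cos t) * sin t = (-1)^n * sin ((real n + 1) * t)"
proof (induction n rule: nat_less_induct)
  case (1 n)
  show ?case
  proof (cases n)
    case 0 then show ?thesis by simp
  next
    case (Suc m)
    show ?thesis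
    proof (cases m)
      case 0 then show ?thesis using Suc by (simp add: sin_double)
    next
      case (Suc k)
      have ih1: "Jp k (- cos t) * sin t = (-1)^k * sin ((real k + 1) * t)" using 1 Suc \<open>n = Suc m\<close> by simp
      have ih2: "Jp (Suc k) (- cos t) * sin t = (-1)^(Suc k) * sin ((real k + 2) * t)"
        using 1 Suc \<open>n = Suc m\<close> by (simp add: add.commute)
      have e: "sin ((real k + 3) * t) + sin ((real k + 1) * t) = 2 * cos t * sin ((real k + 2) * t)"
        using sin_add[of "(real k + 2) * t" t] sin_diff[of "(real k + 2) * t" t]
        by (simp add: algebra_simps)
      have "Jp n (- cos t) * sin t = 2 * (-cos t) * (Jp (Suc k) (- cos t) * sin t) - Jp k (- cos t) * sin t"
        using Suc \<open>n = Suc m\<close> by (simp add: algebra_simps)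
      also have "\<dots> = (-1)^n * sin ((real n + 1) * t)"
        unfolding ih1 ih2 using Suc \<open>n = Suc m\<close> e[THEN arg_cong[where f="\<lambda>z. (-1::real)^k * z"]] by (simp add: algebra_simps)
      finally show ?thesis .
    qed
  qed
qed

lemma Jm_trig: "Jm n (- cos t) * (1 - cos t) = (-1)^n * (cos (real n * t) - cos ((real n + 1) * t))"
proof (induction n rule: nat_less_induct)
  case (1 n)
  show ?case
  proof (cases n)
    case 0 then show ?thesis by simp
  next
    case (Suc m)
    show ?thesis
    proof (cases m)
      case 0
      have "cos (2*t) = 2*(cos t)^2 - 1" by (simp add: cos_double_cos)
      then show ?thesis using Suc 0 by (simp add: algebra_simps power2_eq_square)
    next
      case (Suc k)
      have ih1: "Jm k (- cos t) * (1 - cos t) = (-1)^k * (cos (real k * t) - cos ((real k + 1) * t))" using 1 Suc \<open>n = Suc m\<close> by simp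
      have ih2: "Jm (Suc k) (- cos t) * (1 - cos t) = (-1)^(Suc k) * (cos ((real k + 1) * t) - cos ((real k + 2) * t))"
        using 1 Suc \<open>n = Suc m\<close> by (simp add: add.commute)
      have e1: "cos ((real k + 2) * t) + cos ((real k) * t) = 2 * cos t * cos ((real k + 1) * t)"
        using cos_add[of "(real k + 1) * t" t] cos_diff[of "(real k + 1) * t" t]
        by (simp add: algebra_simps)
      have e2: "cos ((real k + 3) * t) + cos ((real k + 1) * t) = 2 * cos t * cos ((real k + 2) * t)"
        using cos_add[of "(real k + 2) * t" t] cos_diff[of "(real k + 2) * t" t]
        by (simp add: algebra_simps)
      have "Jm n (- cos t) * (1 - cos t) = 2 * (-cos t) * (Jm (Suc k) (- cos t) * (1 - cos t)) - Jm k (- cos t) * (1 - cos t)"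
        using Suc \<open>n = Suc m\<close> by (simp add: algebra_simps)
      also have "\<dots> = (-1)^n * (cos (real n * t) - cos ((real n + 1) * t))"
        unfolding ih1 ih2 using Suc \<open>n = Suc m\<close> e1[THEN arg_cong[where f="\<lambda>z. (-1::real)^k * z"]] e2[THEN arg_cong[where f="\<lambda>z. (-1::real)^k * z"]] by (simp add: algebra_simps)
      finally show ?thesis .
    qed
  qed
qed



lemma RL_bound_aux:
  fixes k K :: "real \<Rightarrow> real"
  assumes k: "continuous_on {0..pi} k" and K: "continuous_on {0..pi} K"
  obtains B M where "B > 0" "M > 0" "\<And>t. t \<in> {0..pi} \<Longrightarrow> \<bar>k t\<bar> \<le> B"
    "\<And>t. t \<in> {0..pi} \<Longrightarrow> \<bar>K t\<bar> \<le> M"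
proof -
  have "bounded (k ` {0..pi})" by (rule compact_imp_bounded[OF compact_continuous_image[OF k compact_Icc]])
  then obtain B where B: "B > 0" "\<forall>x\<in>k ` {0..pi}. norm x \<le> B" by (auto simp: bounded_pos)
  have "bounded (K ` {0..pi})" by (rule compact_imp_bounded[OF compact_continuous_image[OF K compact_Icc]])
  then obtain M where M: "M > 0" "\<forall>x\<in>K ` {0..pi}. norm x \<le> M" by (auto simp: bounded_pos)
  show ?thesis using B M by (intro that[of B M]) auto
qed

lemma RL_cos:
  fixes k K :: "real \<Rightarrow> real"
  assumes k: "continuous_on {0..pi} k" and K: "continuous_on {0..pi} K"
    and d: "\<And>t. t \<in> {0<..<pi} \<Longrightarrow> (k has_real_derivative K t) (at t)"
  shows "(\<lambda>m. integral {0..pi} (\<lambda>t. k t * cos (real m * t))) \<longlonglongrightarrow> 0"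
proof -
  obtain B M where BM: "B > 0" "M > 0" "\<And>t. t \<in> {0..pi} \<Longrightarrow> \<bar>k t\<bar> \<le> B"
    "\<And>t. t \<in> {0..pi} \<Longrightarrow> \<bar>K t\<bar> \<le> M" using RL_bound_aux[OF k K] by blast
  have bnd: "norm (integral {0..pi} (\<lambda>t. k t * cos (real m * t))) \<le> (M * pi) / real m" if m: "m \<ge> 1" for m
  proof -
    let ?F = "\<lambda>t. k t * sin (real m * t) / real m"
    let ?f = "\<lambda>t. K t * sin (real m * t) / real m + k t * cos (real m * t)"
    have "(?f has_integral (?F pi - ?F 0)) {0..pi}"
    proof (rule fundamental_theorem_of_calculus_interior)
      show "continuous_on {0..pi} ?F" using m by (intro continuous_intros k) auto
      fix t assume t: "t \<in> {0<..<pi}"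
      have "(?F has_real_derivative (K t * sin (real m * t) + k t * (cos (real m * t) * real m)) / real m) (at t)"
        using m by (auto intro!: derivative_eq_intros d[OF t])
      moreover have "(K t * sin (real m * t) + k t * (cos (real m * t) * real m)) / real m = ?f t"
        using m by (auto simp: field_simps)
      ultimately show "(?F has_vector_derivative ?f t) (at t)"
        by (simp add: has_real_derivative_iff_has_vector_derivative)
    qed simp
    moreover have "?F pi - ?F 0 = 0" by (simp add: sin_npi mult.commute[of _ pi])
    ultimately have I: "(?f has_integral 0) {0..pi}" by simp
    have i1: "(\<lambda>t. K t * sin (real m * t)) integrable_on {0..pi}"
      by (intro integrable_continuous_interval continuous_intros K)
    have i2: "(\<lambda>t. k t * cos (real m * t)) integrable_on {0..pi}"
      by (intro integrable_continuous_interval continuous_intros k)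
    have "integral {0..pi} ?f = integral {0..pi} (\<lambda>t. K t * sin (real m * t)) / real m + integral {0..pi} (\<lambda>t. k t * cos (real m * t))"
      using i1 i2 by (simp add: integral_add integrable_on_divide)
    with I have eq: "integral {0..pi} (\<lambda>t. k t * cos (real m * t)) = - integral {0..pi} (\<lambda>t. K t * sin (real m * t)) / real m"
      by (simp add: integral_unique)
    have "norm (integral {0..pi} (\<lambda>t. K t * sin (real m * t))) \<le> M * measure lborel (cbox 0 pi)"
    proof (rule has_integral_bound[of M _ _ 0 pi])
      show "((\<lambda>t. K t * sin (real m * t)) has_integral integral {0..pi} (\<lambda>t. K t * sin (real m * t))) (cbox 0 pi)"
        using i1 by (simp add: has_integral_integral)
      fix t assume "t \<in> cbox 0 pi"
      then have a: "\<bar>K t\<bar> \<le> M" using BM by simp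
      have b: "\<bar>sin (real m * t)\<bar> \<le> 1" by simp
      show "norm (K t * sin (real m * t)) \<le> M"
        using mult_mono[OF a b] BM(2) by (simp add: abs_mult)
    qed (use BM in auto)
    then show ?thesis unfolding eq using m BM(2) by (simp add: divide_right_mono norm_divide)
  qed
  show ?thesis
  proof (rule Lim_null_comparison)
    show "\<forall>\<^sub>F m in sequentially. norm (integral {0..pi} (\<lambda>t. k t * cos (real m * t))) \<le> (M * pi) / real m"
      using bnd eventually_sequentially by blast
    show "(\<lambda>m. (M * pi) / real m) \<longlonglongrightarrow> 0" by (rule lim_const_over_n)
  qed
qed

lemma RL_sin:
  fixes k K :: "real \<Rightarrow> real"
  assumes k: "continuous_on {0..pi} k" and K: "continuous_on {0..pi} K"
    and d: "\<And>t. t \<in> {0<..<pi} \<Longrightarrow> (k has_real_derivative K t) (at t)"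
  shows "(\<lambda>m. integral {0..pi} (\<lambda>t. k t * sin (real m * t))) \<longlonglongrightarrow> 0"
proof -
  obtain B M where BM: "B > 0" "M > 0" "\<And>t. t \<in> {0..pi} \<Longrightarrow> \<bar>k t\<bar> \<le> B"
    "\<And>t. t \<in> {0..pi} \<Longrightarrow> \<bar>K t\<bar> \<le> M" using RL_bound_aux[OF k K] by blast
  have bnd: "norm (integral {0..pi} (\<lambda>t. k t * sin (real m * t))) \<le> (2 * B + M * pi) / real m" if m: "m \<ge> 1" for m
  proof -
    let ?F = "\<lambda>t. - k t * cos (real m * t) / real m"
    let ?f = "\<lambda>t. - K t * cos (real m * t) / real m + k t * sin (real m * t)"
    have "(?f has_integral (?F pi - ?F 0)) {0..pi}"
    proof (rule fundamental_theorem_of_calculus_interior)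
      show "continuous_on {0..pi} ?F" using m by (intro continuous_intros k) auto
      fix t assume t: "t \<in> {0<..<pi}"
      have "(?F has_real_derivative (- K t * cos (real m * t) + k t * (sin (real m * t) * real m)) / real m) (at t)"
        using m by (auto intro!: derivative_eq_intros d[OF t] simp: field_simps)
      moreover have "(- K t * cos (real m * t) + k t * (sin (real m * t) * real m)) / real m = ?f t"
        using m by (auto simp: field_simps)
      ultimately show "(?F has_vector_derivative ?f t) (at t)"
        by (simp add: has_real_derivative_iff_has_vector_derivative)
    qed simp
    then have I: "integral {0..pi} ?f = ?F pi - ?F 0" by (simp add: integral_unique)
    have i1: "(\<lambda>t. K t * cos (real m * t)) integrable_on {0..pi}"
      by (intro integrable_continuous_interval continuous_intros K)
    have i2: "(\<lambda>t. k t * sin (real m * t)) integrable_on {0..pi}"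
      by (intro integrable_continuous_interval continuous_intros k)
    have "integral {0..pi} ?f = - integral {0..pi} (\<lambda>t. K t * cos (real m * t)) / real m + integral {0..pi} (\<lambda>t. k t * sin (real m * t))"
      using i1 i2 by (simp add: integral_diff integrable_on_divide integral_divide)
    with I have eq: "integral {0..pi} (\<lambda>t. k t * sin (real m * t)) = (?F pi - ?F 0) + integral {0..pi} (\<lambda>t. K t * cos (real m * t)) / real m"
      by simp
    have "norm (integral {0..pi} (\<lambda>t. K t * cos (real m * t))) \<le> M * measure lborel (cbox 0 pi)"
    proof (rule has_integral_bound[of M _ _ 0 pi])
      show "((\<lambda>t. K t * cos (real m * t)) has_integral integral {0..pi} (\<lambda>t. K t * cos (real m * t))) (cbox 0 pi)"
        using i1 by (simp add: has_integral_integral)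
      fix t assume "t \<in> cbox 0 pi"
      then have a: "\<bar>K t\<bar> \<le> M" using BM by simp
      have b: "\<bar>cos (real m * t)\<bar> \<le> 1" by simp
      show "norm (K t * cos (real m * t)) \<le> M"
        using mult_mono[OF a b] BM(2) by (simp add: abs_mult)
    qed (use BM in auto)
    then have n1: "norm (integral {0..pi} (\<lambda>t. K t * cos (real m * t)) / real m) \<le> M * pi / real m"
      using m BM(2) by (simp add: divide_right_mono norm_divide)
    have kb: "\<bar>k pi * cos (real m * pi)\<bar> \<le> B" "\<bar>k 0\<bar> \<le> B"
      using BM(3)[of pi] BM(3)[of 0] abs_cos_le_one[of "real m * pi"] BM(1)
      by (auto simp: abs_mult intro: order_trans[OF mult_left_le])
    have n2: "norm (?F pi - ?F 0) \<le> 2 * B / real m"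
    proof -
      have "?F pi - ?F 0 = (k 0 - k pi * cos (real m * pi)) / real m" by (simp add: diff_divide_distrib)
      moreover have "\<bar>k 0 - k pi * cos (real m * pi)\<bar> \<le> 2 * B" using kb by linarith
      ultimately show ?thesis using m by (simp add: divide_right_mono)
    qed
    have "norm (integral {0..pi} (\<lambda>t. k t * sin (real m * t))) \<le> 2 * B / real m + M * pi / real m"
      unfolding eq by (rule order_trans[OF norm_triangle_ineq add_mono[OF n2 n1]])
    then show ?thesis by (simp add: add_divide_distrib)
  qed
  show ?thesis
  proof (rule Lim_null_comparison)
    show "\<forall>\<^sub>F m in sequentially. norm (integral {0..pi} (\<lambda>t. k t * sin (real m * t))) \<le> (2 * B + M * pi) / real m"
      using bnd eventually_sequentially by blast
    show "(\<lambda>m. (2 * B + M * pi) / real m) \<longlonglongrightarrow> 0" by (rule lim_const_over_n)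
  qed
qed



lemma powr_rew:
  fixes x :: real
  assumes "x \<in> {-1..1}"
  shows "(1-x) powr (-1/2) = 1 / sqrt (1-x)" "(1+x) powr (1/2) = sqrt (1+x)"
proof -
  show "(1+x) powr (1/2) = sqrt (1+x)" using assms by (simp add: powr_half_sqrt)
  show "(1-x) powr (-1/2) = 1 / sqrt (1-x)"
  proof (cases "x = 1")
    case False
    then have "1 - x > 0" using assms by auto
    then show ?thesis by (simp add: powr_minus_divide powr_half_sqrt)
  qed simp
qed

lemma inv_sqrt_integrable:
  "((\<lambda>x::real. 1 / sqrt (1-x)) has_integral (2 * sqrt 2)) {-1..1}"
proof -
  have "((\<lambda>x::real. 1 / sqrt (1-x)) has_integral ((\<lambda>x. - 2 * sqrt (1-x)) 1 - (\<lambda>x. - 2 * sqrt (1-x)) (-1))) {-1..1}"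
  proof (rule fundamental_theorem_of_calculus_interior)
    show "continuous_on {-1..1} (\<lambda>x::real. - 2 * sqrt (1-x))" by (intro continuous_intros)
    fix x :: real assume x: "x \<in> {-1<..<1}"
    then have "((\<lambda>x. - 2 * sqrt (1-x)) has_real_derivative (- 2 * (inverse (sqrt (1-x)) / 2 * (0 - 1)))) (at x)"
      by (auto intro!: derivative_eq_intros)
    moreover have "- 2 * (inverse (sqrt (1-x)) / 2 * (0 - 1)) = 1 / sqrt (1-x)"
      by (simp add: inverse_eq_divide)
    ultimately show "((\<lambda>x. - 2 * sqrt (1-x)) has_vector_derivative 1 / sqrt (1-x)) (at x)"
      using has_real_derivative_iff_has_vector_derivative by metis
  qed simp
  moreover have "(\<lambda>x::real. - 2 * sqrt (1-x)) 1 - (\<lambda>x. - 2 * sqrt (1-x)) (-1) = 2 * sqrt 2" by simp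
  ultimately show ?thesis by simp
qed

lemma transfer:
  fixes \<phi> :: "real \<Rightarrow> real"
  assumes phi: "continuous_on {-1..1} \<phi>"
  shows "((\<lambda>x. \<phi> x * (1-x) powr (-1/2) * (1+x) powr (1/2)) has_integral
           integral {0..pi} (\<lambda>t. \<phi> (- cos t) * (1 - cos t))) {-1..1}"
proof -
  define S :: "real set" where "S = {-1..1}"
  define f where "f = (\<lambda>x::real. \<phi> x * (1-x) powr (-1/2) * (1+x) powr (1/2))"
  define \<psi> where "\<psi> = (\<lambda>x::real. \<phi> x * sqrt (1+x))"
  define g where "g = (\<lambda>x::real. 1 / sqrt (1-x))"
  have fpg: "f x = \<psi> x * g x" if "x \<in> S" for x
    using powr_rew[of x] that unfolding f_def \<psi>_def g_def S_def by simp
  have psic: "continuous_on S \<psi>" unfolding \<psi>_def S_def by (intro continuous_intros phi)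
  have gabs: "g absolutely_integrable_on S"
    unfolding S_def g_def
    by (rule nonnegative_absolutely_integrable_1) (use inv_sqrt_integrable in auto)
  have pgabs: "(\<lambda>x. \<psi> x * g x) absolutely_integrable_on S"
  proof (rule absolutely_integrable_bounded_measurable_product_real)
    show "\<psi> \<in> borel_measurable (lebesgue_on S)"
      by (rule continuous_imp_measurable_on_sets_lebesgue[OF psic]) (simp add: S_def)
    show "S \<in> sets lebesgue" by (simp add: S_def)
    show "bounded (\<psi> ` S)" 
      by (rule compact_imp_bounded[OF compact_continuous_image[OF psic]]) (simp add: S_def)
  qed (rule gabs)
  have fabs: "f absolutely_integrable_on S"
    using set_integrable_cong[of lebesgue lebesgue S S f "\<lambda>x. \<psi> x * g x"] fpg pgabs by simp
  have meas: "(\<lambda>x. indicator S x *\<^sub>R f x) \<in> borel_measurable lborel"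
  proof -
    have "(\<lambda>x. indicator S x *\<^sub>R f x) = (\<lambda>x. (indicator S x *\<^sub>R \<psi> x) * g x)"
      by (auto simp: fpg indicator_def)
    moreover have "(\<lambda>x. indicator S x *\<^sub>R \<psi> x) \<in> borel_measurable borel"
      by (rule borel_measurable_continuous_on_indicator) (auto simp: S_def psic[unfolded S_def])
    moreover have "g \<in> borel_measurable borel" unfolding g_def by measurable
    ultimately show ?thesis by simp
  qed
  have flb: "set_integrable lborel S f"
    using fabs integrable_completion[OF meas] unfolding set_integrable_def
    by simp
  have sub: "set_integrable lborel {0..pi} (\<lambda>t. f (- cos t) * sin t)"
    and eq: "(LBINT x. f x * indicator {- cos 0..- cos pi} x) = (LBINT t. f (- cos t) * sin t * indicator {0..pi} t)"
  proof -
    have flb': "set_integrable lborel {- cos 0..- cos pi} f" using flb by (simp add: S_def)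
    have d: "\<And>x. x \<in> {0..pi} \<Longrightarrow> ((\<lambda>t. - cos t) has_real_derivative sin x) (at x)"
      by (auto intro!: derivative_eq_intros)
    have c: "continuous_on {0..pi} sin" by (intro continuous_intros)
    have nn: "\<And>x. x \<in> {0..pi} \<Longrightarrow> sin x \<ge> 0" by (auto simp: sin_ge_zero)
    show "set_integrable lborel {0..pi} (\<lambda>t. f (- cos t) * sin t)"
      "(LBINT x. f x * indicator {- cos 0..- cos pi} x) = (LBINT t. f (- cos t) * sin t * indicator {0..pi} t)"
      using integral_substitution[OF flb' d c nn] by auto
  qed
  have i1: "(LBINT x. f x * indicator {- cos 0..- cos pi} x) = integral S f"
    using set_borel_integral_eq_integral(2)[OF flb]
    by (simp add: S_def set_lebesgue_integral_def mult.commute)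
  have i2: "(LBINT t. f (- cos t) * sin t * indicator {0..pi} t) = integral {0..pi} (\<lambda>t. f (- cos t) * sin t)"
    using set_borel_integral_eq_integral(2)[OF sub]
    by (simp add: set_lebesgue_integral_def mult.commute)
  have i3: "integral {0..pi} (\<lambda>t. f (- cos t) * sin t) = integral {0..pi} (\<lambda>t. \<phi> (- cos t) * (1 - cos t))"
  proof (rule integral_spike[of "{pi}"])
    fix t assume t: "t \<in> {0..pi} - {pi}"
    then have t0: "0 \<le> t" "t < pi" by auto
    have cm: "cos t > -1" using t0 cos_monotone_0_pi[of t pi] by simp
    have s: "sin t = sqrt (1 - cos t) * sqrt (1 + cos t)"
    proof -
      have "sin t \<ge> 0" using t0 by (simp add: sin_ge_zero)
      then have "sin t = sqrt ((sin t)^2)" by simp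
      also have "(sin t)^2 = (1 - cos t) * (1 + cos t)" by (simp add: sin_squared_eq algebra_simps power2_eq_square)
      finally show ?thesis by (simp add: real_sqrt_mult)
    qed
    have fv: "f (- cos t) = \<phi> (- cos t) * sqrt (1 - cos t) / sqrt (1 + cos t)"
      using fpg[of "- cos t"] by (simp add: S_def \<psi>_def g_def)
    have b: "sqrt (1 + cos t) > 0" using cm by simp
    have "f (- cos t) * sin t = \<phi> (- cos t) * (sqrt (1 - cos t) * sqrt (1 - cos t))"
      unfolding fv s using b by (simp add: field_simps)
    also have "sqrt (1 - cos t) * sqrt (1 - cos t) = 1 - cos t" by simp
    finally show "\<phi> (- cos t) * (1 - cos t) = f (- cos t) * sin t" by simp
  qed simp
  have "f integrable_on S" using set_borel_integral_eq_integral(1)[OF flb] .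
  then have "(f has_integral integral S f) S" by (simp add: has_integral_integral)
  then show ?thesis using eq i1 i2 i3 unfolding S_def f_def by simp
qed


lemma Jp_Jm_cont: "continuous_on S (Jp n) \<and> continuous_on S (Jp (Suc n)) \<and> continuous_on S (Jm n) \<and> continuous_on S (Jm (Suc n))"
proof (induction n)
  case 0
  have a: "Jp 0 = (\<lambda>x. 1)" "Jp (Suc 0) = (\<lambda>x. 2*x)" "Jm 0 = (\<lambda>x. 1)" "Jm (Suc 0) = (\<lambda>x. 2*x - 1)"
    by (auto intro!: ext)
  show ?case unfolding a by (auto intro!: continuous_intros)
next
  case (Suc n)
  have a: "Jp (Suc (Suc n)) = (\<lambda>x. 2*x*Jp (Suc n) x - Jp n x)" "Jm (Suc (Suc n)) = (\<lambda>x. 2*x*Jm (Suc n) x - Jm n x)"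
    by (auto intro!: ext)
  show ?case using Suc unfolding a by (auto intro!: continuous_intros)
qed

lemma Jp_cont: "continuous_on S (Jp n)" and Jm_cont: "continuous_on S (Jm n)"
  using Jp_Jm_cont by blast+

lemma ipm_eq:
  assumes "continuous_on {-1..1} (\<lambda>x. f x * g x)"
  shows "ip (-1/2) f g = integral {0..pi} (\<lambda>t. f (- cos t) * g (- cos t) * (1 - cos t)) / pi"
  using integral_unique[OF transfer[OF assms]] unfolding ip_def by simp

lemma cos_into: "(\<lambda>t::real. - cos t) ` S \<subseteq> {-1..1}"
proof
  fix y assume "y \<in> (\<lambda>t. - cos t) ` S"
  then obtain t where "y = - cos t" by auto
  then show "y \<in> {-1..1}" using cos_le_one[of t] cos_ge_minus_one[of t] by auto
qed

lemma int_cos: "k \<ge> 1 \<Longrightarrow> integral {0..pi} (\<lambda>t. cos (real k * t)) = 0"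
proof -
  assume k: "k \<ge> 1"
  have "((\<lambda>t. cos (real k * t)) has_integral ((\<lambda>t. sin (real k * t) / real k) pi - (\<lambda>t. sin (real k * t) / real k) 0)) {0..pi}"
  proof (rule fundamental_theorem_of_calculus_interior)
    show "continuous_on {0..pi} (\<lambda>t. sin (real k * t) / real k)" using k by (intro continuous_intros) auto
    fix t :: real
    have "((\<lambda>t. sin (real k * t) / real k) has_real_derivative (cos (real k * t) * real k) / real k) (at t)"
      by (auto intro!: derivative_eq_intros)
    then show "((\<lambda>t. sin (real k * t) / real k) has_vector_derivative cos (real k * t)) (at t)"
      using k by (simp add: has_real_derivative_iff_has_vector_derivative)
  qed simp
  then show ?thesis by (simp add: integral_unique sin_npi mult.commute[of _ pi])
qed

lemma int_Jm: "integral {0..pi} (\<lambda>t. Jm n (- cos t) * (1 - cos t)) = (if n = 0 then pi else 0)"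
proof -
  have "integral {0..pi} (\<lambda>t. Jm n (- cos t) * (1 - cos t)) =
        (-1)^n * (integral {0..pi} (\<lambda>t. cos (real n * t)) - integral {0..pi} (\<lambda>t. cos (real (Suc n) * t)))"
    unfolding Jm_trig
    by (subst integral_mult_right, subst integral_diff) (auto intro!: integrable_continuous_interval continuous_intros simp: add.commute)
  moreover have "integral {0..pi} (\<lambda>t. cos (real (Suc n) * t)) = 0" by (rule int_cos) simp
  moreover have "n \<noteq> 0 \<Longrightarrow> integral {0..pi} (\<lambda>t. cos (real n * t)) = 0" by (rule int_cos) simp
  ultimately show ?thesis by auto
qed

lemma ip_one: "ip (-1/2) (Jp m) (\<lambda>x. 1) = 1"
proof -
  have "ip (-1/2) (Jp m) (\<lambda>x. 1) = integral {0..pi} (\<lambda>t. Jp m (- cos t) * (1 - cos t)) / pi"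
    by (subst ipm_eq) (auto intro: Jp_cont)
  also have "integral {0..pi} (\<lambda>t. Jp m (- cos t) * (1 - cos t)) = (\<Sum>r\<le>m. integral {0..pi} (\<lambda>t. Jm r (- cos t) * (1 - cos t)))"
    unfolding part1[symmetric] sum_distrib_right
    by (rule integral_sum) (auto intro!: integrable_continuous_interval continuous_intros continuous_on_compose2[OF Jm_cont])
  also have "\<dots> = pi" unfolding int_Jm by (simp add: sum.delta)
  finally show ?thesis by simp
qed



context
  fixes T T' :: "real \<Rightarrow> real"
  assumes T'c: "continuous_on {-1..1} T'"
    and Td: "\<And>x. x \<in> {-1..1} \<Longrightarrow> (T has_real_derivative T' x) (at x within {-1..1})"
begin

lemma Tc: "continuous_on {-1..1} T"
  unfolding continuous_on_eq_continuous_within using Td DERIV_continuous by blast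

lemma Tdi: "x \<in> {-1<..<1} \<Longrightarrow> (T has_real_derivative T' x) (at x)"
  using Td[of x] at_within_interior[of x "{-1..1}"] by auto

lemma Gd: "t \<in> {0<..<pi} \<Longrightarrow> ((\<lambda>t. T (- cos t)) has_real_derivative T' (- cos t) * sin t) (at t)"
proof -
  assume t: "t \<in> {0<..<pi}"
  have "cos t < 1" using t cos_monotone_0_pi[of 0 t] by simp
  moreover have "cos t > -1" using t cos_monotone_0_pi[of t pi] by simp
  ultimately have x: "- cos t \<in> {-1<..<1}" by auto
  have "((\<lambda>t. - cos t) has_real_derivative sin t) (at t)" by (auto intro!: derivative_eq_intros)
  from DERIV_chain2[OF Tdi[OF x] this] show ?thesis .
qed

lemma Gc: "continuous_on {0..pi} (\<lambda>t. T (- cos t))"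
  by (rule continuous_on_compose2[OF Tc _ cos_into]) (intro continuous_intros)

lemma G'c: "continuous_on {0..pi} (\<lambda>t. T' (- cos t) * sin t)"
  by (intro continuous_intros continuous_on_compose2[OF T'c _ cos_into])

lemma ipm_lim: "(\<lambda>n. ip (-1/2) (Jm n) T) \<longlonglongrightarrow> 0"
proof -
  define I where "I = (\<lambda>n. integral {0..pi} (\<lambda>t. T (- cos t) * cos (real n * t)))"
  have I0: "I \<longlonglongrightarrow> 0" unfolding I_def by (rule RL_cos[OF Gc G'c Gd])
  have eq: "ip (-1/2) (Jm n) T = (-1)^n * (I n - I (Suc n)) / pi" for n
  proof -
    have "ip (-1/2) (Jm n) T = integral {0..pi} (\<lambda>t. Jm n (- cos t) * T (- cos t) * (1 - cos t)) / pi"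
      by (rule ipm_eq) (intro continuous_intros Jm_cont Tc)
    also have "(\<lambda>t. Jm n (- cos t) * T (- cos t) * (1 - cos t)) =
        (\<lambda>t. (-1)^n * (T (- cos t) * cos (real n * t) - T (- cos t) * cos (real (Suc n) * t)))"
    proof
      fix t
      show "Jm n (- cos t) * T (- cos t) * (1 - cos t) = (-1)^n * (T (- cos t) * cos (real n * t) - T (- cos t) * cos (real (Suc n) * t))"
        using Jm_trig[of n t] arg_cong[OF Jm_trig[of n t], of "\<lambda>z. z * T (- cos t)"]
        by (simp add: algebra_simps add.commute)
    qed
    also have "integral {0..pi} \<dots> = (-1)^n * (I n - I (Suc n))"
      unfolding I_def
      by (subst integral_mult_right, subst integral_diff)
        (auto intro!: integrable_continuous_interval continuous_intros Gc)
    finally show ?thesis .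
  qed
  have "(\<lambda>n. \<bar>I n\<bar> + \<bar>I (Suc n)\<bar>) \<longlonglongrightarrow> 0 + 0"
    by (intro tendsto_add tendsto_rabs_zero I0 LIMSEQ_Suc)
  then have lim: "(\<lambda>n. (\<bar>I n\<bar> + \<bar>I (Suc n)\<bar>) / pi) \<longlonglongrightarrow> 0"
    using tendsto_divide_zero by fastforce
  show ?thesis
  proof (rule Lim_null_comparison[OF _ lim])
    show "\<forall>\<^sub>F n in sequentially. norm (ip (- 1 / 2) (Jm n) T) \<le> (\<bar>I n\<bar> + \<bar>I (Suc n)\<bar>) / pi"
    proof (rule always_eventually, rule allI)
      fix n
      have "norm (ip (- 1 / 2) (Jm n) T) = \<bar>I n - I (Suc n)\<bar> / pi" unfolding eq by (simp add: abs_mult)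
      also have "\<dots> \<le> (\<bar>I n\<bar> + \<bar>I (Suc n)\<bar>) / pi" by (intro divide_right_mono) auto
      finally show "norm (ip (- 1 / 2) (Jm n) T) \<le> (\<bar>I n\<bar> + \<bar>I (Suc n)\<bar>) / pi" .
    qed
  qed
qed

lemma pw_half:
  fixes x :: real
  assumes x: "x \<in> {-1..1}"
  shows "Jm m x * T x * (1-x) powr (-1/2) * (1+x) powr (1/2) - Jm (Suc m) x * T x * (1-x) powr (-1/2) * (1+x) powr (1/2)
       = 2 * (Jp m x * T x * (1-x) powr (1/2) * (1+x) powr (1/2))"
proof (cases "x = 1")
  case False
  then have p: "1 - x > 0" using x by auto
  have e: "(1-x) powr (1/2) = (1-x) * (1-x) powr (-1/2)"
    using powr_add[of "1-x" 1 "-1/2"] p by simp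
  have d: "Jm (Suc m) x = Jm m x + 2*(x-1)*Jp m x" using Jm_diff[of m x] by simp
  show ?thesis unfolding e d by (simp add: algebra_simps)
qed simp

lemma ip_half_step: "ip (1/2) (Jp m) T = ip (-1/2) (Jm m) T - ip (-1/2) (Jm (Suc m)) T"
proof -
  let ?a = "\<lambda>x. Jm m x * T x * (1-x) powr (-1/2) * (1+x) powr (1/2)"
  let ?b = "\<lambda>x. Jm (Suc m) x * T x * (1-x) powr (-1/2) * (1+x) powr (1/2)"
  let ?c = "\<lambda>x. Jp m x * T x * (1-x) powr (1/2) * (1+x) powr (1/2)"
  have ia: "?a integrable_on {-1..1}"
    using transfer[of "\<lambda>x. Jm m x * T x"] by (blast intro: has_integral_integrable continuous_intros Jm_cont Tc)
  have ib: "?b integrable_on {-1..1}"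
    using transfer[of "\<lambda>x. Jm (Suc m) x * T x"] by (blast intro: has_integral_integrable continuous_intros Jm_cont Tc)
  have "((\<lambda>x. ?a x - ?b x) has_integral (integral {-1..1} ?a - integral {-1..1} ?b)) {-1..1}"
    by (intro has_integral_diff integrable_integral ia ib)
  then have "((\<lambda>x. 2 * ?c x) has_integral (integral {-1..1} ?a - integral {-1..1} ?b)) {-1..1}"
    by (rule has_integral_cong[THEN iffD1, rotated]) (use pw_half in auto)
  then have "((\<lambda>x. (1/2) * (2 * ?c x)) has_integral (1/2) * (integral {-1..1} ?a - integral {-1..1} ?b)) {-1..1}"
    by (rule has_integral_mult_right)
  then have "integral {-1..1} ?c = (1/2) * (integral {-1..1} ?a - integral {-1..1} ?b)"
    by (simp add: integral_unique)
  moreover have "ip (1/2) (Jp m) T = 2 * integral {-1..1} ?c / pi" unfolding ip_def by simp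
  moreover have "ip (-1/2) (Jm m) T = integral {-1..1} ?a / pi" unfolding ip_def by simp
  moreover have "ip (-1/2) (Jm (Suc m)) T = integral {-1..1} ?b / pi" unfolding ip_def by simp
  ultimately show ?thesis by (simp add: diff_divide_distrib)
qed

lemma part4: "(\<lambda>r. ip (1/2) (Jp (r + s)) T) sums ip (-1/2) (Jm s) T"
proof -
  have ps: "(\<Sum>r<N. ip (1/2) (Jp (r + s)) T) = ip (-1/2) (Jm s) T - ip (-1/2) (Jm (N + s)) T" for N
    by (induction N) (simp_all add: ip_half_step)
  have "(\<lambda>N. ip (-1/2) (Jm (N + s)) T) \<longlonglongrightarrow> 0"
    using LIMSEQ_ignore_initial_segment[OF ipm_lim, of s] by simp
  then have "(\<lambda>N. ip (-1/2) (Jm s) T - ip (-1/2) (Jm (N + s)) T) \<longlonglongrightarrow> ip (-1/2) (Jm s) T - 0"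
    by (intro tendsto_diff tendsto_const)
  then show ?thesis unfolding sums_def ps by simp
qed

definition hq :: "real \<Rightarrow> real" where
  "hq x = (if x = 1 then T' 1 else (T 1 - T x) / (1 - x))"

lemma hrel: "T 1 - T x = hq x * (1 - x)"
  by (cases "x = 1") (auto simp: hq_def)

lemma hc: "continuous_on {-1..1} hq"
  unfolding continuous_on_eq_continuous_within
proof (intro ballI)
  fix x :: real assume x: "x \<in> {-1..1}"
  show "continuous (at x within {-1..1}) hq"
  proof (cases "x = 1")
    case True
    have "((\<lambda>y. (T y - T 1) / (y - 1)) \<longlongrightarrow> T' 1) (at 1 within {-1..1})"
      using Td[of 1] has_field_derivative_iff by auto
    moreover have "eventually (\<lambda>y. (T y - T 1) / (y - 1) = hq y) (at 1 within {-1..1})"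
      unfolding eventually_at_filter
      by (rule always_eventually) (auto simp: hq_def intro: minus_divide_divide[of "T 1 - T _" "1 - _", simplified])
    ultimately have "(hq \<longlongrightarrow> hq 1) (at 1 within {-1..1})"
      using tendsto_cong by (fastforce simp: hq_def)
    then show ?thesis using True by (simp add: continuous_within)
  next
    case False
    then have x1: "x < 1" using x by auto
    have "continuous (at x within {-1..1}) T" using Tc x by (simp add: continuous_on_eq_continuous_within)
    then have "continuous (at x within {-1..1}) (\<lambda>y. (T 1 - T y) / (1 - y))"
      using x1 by (intro continuous_intros) auto
    then have "((\<lambda>y. (T 1 - T y) / (1 - y)) \<longlongrightarrow> hq x) (at x within {-1..1})"
      using False by (simp add: continuous_within hq_def)
    moreover have "eventually (\<lambda>y. (T 1 - T y) / (1 - y) = hq y) (at x within {-1..1})"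
      unfolding eventually_at_filter
      by (rule eventually_mono[OF eventually_nhds_in_open[of "{..<1}" x]]) (use x1 in \<open>auto simp: hq_def\<close>)
    ultimately have "(hq \<longlongrightarrow> hq x) (at x within {-1..1})"
      using tendsto_cong by fastforce
    then show ?thesis by (simp add: continuous_within)
  qed
qed

lemma hd: "x \<in> {-1<..<1} \<Longrightarrow> (hq has_real_derivative (hq x - T' x) / (1 - x)) (at x)"
proof -
  assume x: "x \<in> {-1<..<1}"
  then have x1: "1 - x > 0" by auto
  have "((\<lambda>y. (T 1 - T y) / (1 - y)) has_real_derivative (hq x - T' x) / (1 - x)) (at x)"
    using x1 by (auto intro!: derivative_eq_intros Tdi[OF x] simp: hq_def field_simps power2_eq_square)
  then show ?thesis
    by (rule has_field_derivative_transform_within_open[of _ _ _ "{..<1}"]) (use x in \<open>auto simp: hq_def\<close>)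
qed

lemma kd: "t \<in> {0<..<pi} \<Longrightarrow> ((\<lambda>t. sin t * hq (- cos t)) has_real_derivative (hq (- cos t) - T' (- cos t) * (1 - cos t))) (at t)"
proof -
  assume t: "t \<in> {0<..<pi}"
  have "cos t < 1" using t cos_monotone_0_pi[of 0 t] by simp
  moreover have c1: "cos t > -1" using t cos_monotone_0_pi[of t pi] by simp
  ultimately have x: "- cos t \<in> {-1<..<1}" by auto
  have "((\<lambda>t. - cos t) has_real_derivative sin t) (at t)" by (auto intro!: derivative_eq_intros)
  from DERIV_chain2[OF hd[OF x] this]
  have "((\<lambda>t. hq (- cos t)) has_real_derivative (hq (- cos t) - T' (- cos t)) / (1 + cos t) * sin t) (at t)" by simp
  from DERIV_mult[OF DERIV_sin this]
  have d: "((\<lambda>t. sin t * hq (- cos t)) has_real_derivative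
      cos t * hq (- cos t) + (hq (- cos t) - T' (- cos t)) / (1 + cos t) * sin t * sin t) (at t)" .
  have s2: "sin t * sin t = 1 - cos t * cos t" using sin_cos_squared_add3[of t] by linarith
  have ss: "sin t * (sin t * z) = z - cos t * (cos t * z)" for z
  proof -
    have "sin t * (sin t * z) = (sin t * sin t) * z" by (rule mult.assoc[symmetric])
    also have "\<dots> = (1 - cos t * cos t) * z" by (simp only: s2)
    finally show ?thesis by (simp add: left_diff_distrib)
  qed
  have "cos t * hq (- cos t) + (hq (- cos t) - T' (- cos t)) / (1 + cos t) * sin t * sin t
      = hq (- cos t) - T' (- cos t) * (1 - cos t)"
    using c1 by (simp add: field_simps) (simp add: ss algebra_simps)
  with d show ?thesis by simp
qed

lemma kc: "continuous_on {0..pi} (\<lambda>t. sin t * hq (- cos t))"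
  by (intro continuous_intros continuous_on_compose2[OF hc _ cos_into])

lemma Kc: "continuous_on {0..pi} (\<lambda>t. hq (- cos t) - T' (- cos t) * (1 - cos t))"
  by (intro continuous_intros continuous_on_compose2[OF hc _ cos_into] continuous_on_compose2[OF T'c _ cos_into])

lemma Jpc: "continuous_on {0..pi} (\<lambda>t. Jp m (- cos t))"
  by (intro continuous_intros continuous_on_compose2[OF Jp_cont _ cos_into])

lemma b_eq: "ip (-1/2) (Jp m) (\<lambda>x. T 1 - T x) =
   (-1)^m * integral {0..pi} (\<lambda>t. (sin t * hq (- cos t)) * sin (real (Suc m) * t)) / pi"
proof -
  have "ip (-1/2) (Jp m) (\<lambda>x. T 1 - T x) = integral {0..pi} (\<lambda>t. Jp m (- cos t) * (T 1 - T (- cos t)) * (1 - cos t)) / pi"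
    by (rule ipm_eq) (intro continuous_intros Jp_cont Tc)
  also have "(\<lambda>t. Jp m (- cos t) * (T 1 - T (- cos t)) * (1 - cos t)) = (\<lambda>t. (-1)^m * ((sin t * hq (- cos t)) * sin (real (Suc m) * t)))"
  proof
    fix t :: real
    have s2: "(1 + cos t) * (1 - cos t) = sin t * sin t" using sin_cos_squared_add3[of t] by (simp add: algebra_simps)
    have "Jp m (- cos t) * (T 1 - T (- cos t)) * (1 - cos t) = Jp m (- cos t) * hq (- cos t) * ((1 + cos t) * (1 - cos t))"
      unfolding hrel[of "- cos t"] by (simp add: ac_simps)
    also have "\<dots> = (Jp m (- cos t) * sin t) * sin t * hq (- cos t)"
      unfolding s2 by (simp add: ac_simps)
    also have "\<dots> = (-1)^m * ((sin t * hq (- cos t)) * sin (real (Suc m) * t))"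
      unfolding Jp_trig by (simp add: algebra_simps add.commute)
    finally show "Jp m (- cos t) * (T 1 - T (- cos t)) * (1 - cos t) = (-1)^m * ((sin t * hq (- cos t)) * sin (real (Suc m) * t))" .
  qed
  also have "integral {0..pi} (\<lambda>t. (-1)^m * ((sin t * hq (- cos t)) * sin (real (Suc m) * t))) =
      (-1)^m * integral {0..pi} (\<lambda>t. (sin t * hq (- cos t)) * sin (real (Suc m) * t))"
    by (rule integral_mult_right)
  finally show ?thesis .
qed

lemma b_lim: "(\<lambda>m. ip (-1/2) (Jp m) (\<lambda>x. T 1 - T x)) \<longlonglongrightarrow> 0"
proof -
  define J where "J = (\<lambda>m. integral {0..pi} (\<lambda>t. (sin t * hq (- cos t)) * sin (real m * t)))"
  have "J \<longlonglongrightarrow> 0" unfolding J_def by (rule RL_sin[OF kc Kc kd])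
  then have "(\<lambda>m. \<bar>J (Suc m)\<bar> / pi) \<longlonglongrightarrow> 0"
    using tendsto_divide_zero[OF tendsto_rabs_zero[OF LIMSEQ_Suc]] by blast
  then show ?thesis
  proof (rule Lim_null_comparison[rotated])
    show "\<forall>\<^sub>F m in sequentially. norm (ip (-1/2) (Jp m) (\<lambda>x. T 1 - T x)) \<le> \<bar>J (Suc m)\<bar> / pi"
    proof (rule always_eventually, rule allI)
      fix m
      show "norm (ip (-1/2) (Jp m) (\<lambda>x. T 1 - T x)) \<le> \<bar>J (Suc m)\<bar> / pi"
        unfolding b_eq J_def by (simp add: abs_mult)
    qed
  qed
qed

lemma a_plus_b: "ip (-1/2) (Jp m) T + ip (-1/2) (Jp m) (\<lambda>x. T 1 - T x) = T 1"
proof -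
  have e1: "ip (-1/2) (Jp m) T = integral {0..pi} (\<lambda>t. Jp m (- cos t) * T (- cos t) * (1 - cos t)) / pi"
    by (rule ipm_eq) (intro continuous_intros Jp_cont Tc)
  have e2: "ip (-1/2) (Jp m) (\<lambda>x. T 1 - T x) = integral {0..pi} (\<lambda>t. Jp m (- cos t) * (T 1 - T (- cos t)) * (1 - cos t)) / pi"
    by (rule ipm_eq) (intro continuous_intros Jp_cont Tc)
  have e3: "ip (-1/2) (Jp m) (\<lambda>x. 1) = integral {0..pi} (\<lambda>t. Jp m (- cos t) * 1 * (1 - cos t)) / pi"
    by (rule ipm_eq) (intro continuous_intros Jp_cont)
  have "integral {0..pi} (\<lambda>t. Jp m (- cos t) * T (- cos t) * (1 - cos t)) + integral {0..pi} (\<lambda>t. Jp m (- cos t) * (T 1 - T (- cos t)) * (1 - cos t))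
     = integral {0..pi} (\<lambda>t. Jp m (- cos t) * T (- cos t) * (1 - cos t) + Jp m (- cos t) * (T 1 - T (- cos t)) * (1 - cos t))"
    by (rule integral_add[symmetric]) (auto intro!: integrable_continuous_interval continuous_intros Jpc Gc)
  also have "(\<lambda>t. Jp m (- cos t) * T (- cos t) * (1 - cos t) + Jp m (- cos t) * (T 1 - T (- cos t)) * (1 - cos t))
      = (\<lambda>t. T 1 * (Jp m (- cos t) * 1 * (1 - cos t)))" by (auto simp: algebra_simps)
  also have "integral {0..pi} \<dots> = T 1 * integral {0..pi} (\<lambda>t. Jp m (- cos t) * 1 * (1 - cos t))"
    by (rule integral_mult_right)
  finally have "ip (-1/2) (Jp m) T + ip (-1/2) (Jp m) (\<lambda>x. T 1 - T x) = T 1 * ip (-1/2) (Jp m) (\<lambda>x. 1)"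
    unfolding e1 e2 e3 by (simp add: add_divide_distrib[symmetric])
  then show ?thesis unfolding ip_one by simp
qed

lemma jm_step: "ip (-1/2) (Jm (Suc n)) T = ip (-1/2) (Jp (Suc n)) T - ip (-1/2) (Jp n) T"
proof -
  have e: "ip (-1/2) f T = integral {0..pi} (\<lambda>t. f (- cos t) * T (- cos t) * (1 - cos t)) / pi"
    if "continuous_on UNIV f" for f
    by (rule ipm_eq) (intro continuous_intros continuous_on_subset[OF that] Tc, simp)
  have "integral {0..pi} (\<lambda>t. Jp (Suc n) (- cos t) * T (- cos t) * (1 - cos t)) - integral {0..pi} (\<lambda>t. Jp n (- cos t) * T (- cos t) * (1 - cos t))
     = integral {0..pi} (\<lambda>t. Jp (Suc n) (- cos t) * T (- cos t) * (1 - cos t) - Jp n (- cos t) * T (- cos t) * (1 - cos t))"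
    by (rule integral_diff[symmetric]) (auto intro!: integrable_continuous_interval continuous_intros Jpc Gc)
  also have "(\<lambda>t. Jp (Suc n) (- cos t) * T (- cos t) * (1 - cos t) - Jp n (- cos t) * T (- cos t) * (1 - cos t))
     = (\<lambda>t. Jm (Suc n) (- cos t) * T (- cos t) * (1 - cos t))"
    by (auto simp: Jm_Jp algebra_simps)
  finally show ?thesis
    unfolding e[OF Jm_cont] e[OF Jp_cont] by (simp add: diff_divide_distrib[symmetric])
qed

lemma part3: "(\<lambda>r. ip (-1/2) (Jm (r + s + 1)) T) sums ip (-1/2) (Jp s) (\<lambda>x. T 1 - T x)"
proof -
  have ps: "(\<Sum>r<N. ip (-1/2) (Jm (r + s + 1)) T) = ip (-1/2) (Jp (N + s)) T - ip (-1/2) (Jp s) T" for N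
  proof (induction N)
    case (Suc N)
    have "ip (-1/2) (Jm (N + s + 1)) T = ip (-1/2) (Jp (Suc N + s)) T - ip (-1/2) (Jp (N + s)) T"
      using jm_step[of "N + s"] by simp
    then show ?case using Suc by simp
  qed simp
  have a: "ip (-1/2) (Jp m) T = T 1 - ip (-1/2) (Jp m) (\<lambda>x. T 1 - T x)" for m
    using a_plus_b[of m] by simp
  have "(\<lambda>N. ip (-1/2) (Jp (N + s)) (\<lambda>x. T 1 - T x)) \<longlonglongrightarrow> 0"
    using LIMSEQ_ignore_initial_segment[OF b_lim, of s] by simp
  then have "(\<lambda>N. (T 1 - ip (-1/2) (Jp (N + s)) (\<lambda>x. T 1 - T x)) - ip (-1/2) (Jp s) T) \<longlonglongrightarrow> (T 1 - 0) - ip (-1/2) (Jp s) T"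
    by (intro tendsto_diff tendsto_const)
  then show ?thesis unfolding sums_def ps a[of "_ + s"] using a[of s] by simp
qed

end

theorem lemma3p1:
  shows "(\<forall>s x. (\<Sum>r\<le>s. Jm r x) = Jp s x)
    \<and> (\<forall>s x. s \<ge> 1 \<longrightarrow> x \<noteq> 1 \<longrightarrow>
          (\<Sum>r<s. 2 * Jp r x) = (Jm s x - 1) / (x - 1))
    \<and> (\<forall>T s. C1_on_interval T \<longrightarrow>
          (\<lambda>r. ip (-1/2) (Jm (r + s + 1)) T) sums ip (-1/2) (Jp s) (\<lambda>x. T 1 - T x))
    \<and> (\<forall>T s. C1_on_interval T \<longrightarrow>
          (\<lambda>r. ip (1/2) (Jp (r + s)) T) sums ip (-1/2) (Jm s) T)"
proof (intro conjI allI impI)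
  fix s x show "(\<Sum>r\<le>s. Jm r x) = Jp s x" by (rule part1)
next
  fix s :: nat and x :: real assume "s \<ge> 1" "x \<noteq> 1"
  then show "(\<Sum>r<s. 2 * Jp r x) = (Jm s x - 1) / (x - 1)" by (rule part2)
next
  fix T :: "real \<Rightarrow> real" and s :: nat assume "C1_on_interval T"
  then obtain T' where a: "continuous_on {-1..1} T'"
    "\<forall>x\<in>{-1..1}. (T has_real_derivative T' x) (at x within {-1..1})"
    unfolding C1_on_interval_def by blast
  show "(\<lambda>r. ip (-1/2) (Jm (r + s + 1)) T) sums ip (-1/2) (Jp s) (\<lambda>x. T 1 - T x)"
    by (rule part3[where T=T and T'=T']) (use a in auto)
next
  fix T :: "real \<Rightarrow> real" and s :: nat assume "C1_on_interval T"
  then obtain T' where a: "continuous_on {-1..1} T'"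
    "\<forall>x\<in>{-1..1}. (T has_real_derivative T' x) (at x within {-1..1})"
    unfolding C1_on_interval_def by blast
  show "(\<lambda>r. ip (1/2) (Jp (r + s)) T) sums ip (-1/2) (Jm s) T"
    by (rule part4[where T=T and T'=T']) (use a in auto)
qed

end
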